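(* Consider a time-varying graph based on continuous time intervals with $n$ nodes and $m$ edges, where the presence of the edges is specified by a total of $\eta$ continuous time intervals. Then it can be represented as a time-varying graph $H=(V,E,T)$ (with $E\subseteq V\times T\times V\times T$), using only spatial and temporal dynamic edges, with $|E|=O(\eta^2)$ dynamic edges.
   Context: A continuous-time-interval TVG consists of nodes and edges, each edge $\{u,v\}$ being present during a finite union of time intervals $(a,b]\subset\mathbb{R}^+$ of non-zero finite length; $\eta$ is the total number of such intervals over all edges. In the discrete model $H=(V,E,T)$, $V$ is a finite node set, $T$ a finite set of time instants, and a dynamic edge $(u,t_a,v,t_b)\in E$ is a directed edge from node $u$ at time $t_a$ to node $v$ at time $t_b$. A spatial edge has the form $(u,t_a,v,t_a)$ with $u\neq v$; a temporal edge has the form $(u,t_a,u,t_b)$ with $t_a\neq t_b$. The representation takes $T$ to be the set of endpoints of all intervals; for each interval $(a,b]$ of an edge $\{u,v\}$, spatial edges connect $u$ and $v$ at the time instants of $T$ in $[a,b]$, and temporal edges connect $u$ (resp. $v$) between successive such time instants, so that the presence of the edge over the whole interval is encoded. *)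

theory Defs
  imports Complex_Main
begin

text \<open>Continuous-time-interval TVG: node set V, edge set Ed of unordered pairs {u,v},
and for each edge a finite set of intervals (a,b], represented by pairs (a,b)
with 0 \<le> a < b.\<close>

definition ctvg :: "nat set \<Rightarrow> nat set set \<Rightarrow> (nat set \<Rightarrow> (real \<times> real) set) \<Rightarrow> bool" where
  "ctvg V Ed I \<longleftrightarrow> finite V \<and> finite Ed \<and>
     (\<forall>e\<in>Ed. \<exists>u v. e = {u, v} \<and> u \<noteq> v \<and> u \<in> V \<and> v \<in> V) \<and>
     (\<forall>e\<in>Ed. finite (I e) \<and> (\<forall>(a, b)\<in>I e. 0 \<le> a \<and> a < b))"

definition eta :: "nat set set \<Rightarrow> (nat set \<Rightarrow> (real \<times> real) set) \<Rightarrow> nat" where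
  "eta Ed I = (\<Sum>e\<in>Ed. card (I e))"

definition time_instants :: "nat set set \<Rightarrow> (nat set \<Rightarrow> (real \<times> real) set) \<Rightarrow> real set" where
  "time_instants Ed I = (\<Union>e\<in>Ed. \<Union>(a, b)\<in>I e. {a, b})"

type_synonym dyn_edge = "nat \<times> real \<times> nat \<times> real"

definition spatial :: "dyn_edge \<Rightarrow> bool" where
  "spatial d \<longleftrightarrow> (case d of (u, ta, v, tb) \<Rightarrow> ta = tb \<and> u \<noteq> v)"

definition temporal :: "dyn_edge \<Rightarrow> bool" where
  "temporal d \<longleftrightarrow> (case d of (u, ta, v, tb) \<Rightarrow> u = v \<and> ta \<noteq> tb)"

definition interval_edges :: "real set \<Rightarrow> nat set \<Rightarrow> real \<Rightarrow> real \<Rightarrow> dyn_edge set" where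
  "interval_edges T e a b =
     {(x, t, y, t) | x y t. x \<in> e \<and> y \<in> e \<and> x \<noteq> y \<and> t \<in> T \<and> a \<le> t \<and> t \<le> b}
   \<union> {(x, t, x, t') | x t t'. x \<in> e \<and> t \<in> T \<and> t' \<in> T \<and> a \<le> t \<and> t < t' \<and> t' \<le> b \<and>
        \<not> (\<exists>s\<in>T. t < s \<and> s < t')}"

definition repr_E :: "nat set set \<Rightarrow> (nat set \<Rightarrow> (real \<times> real) set) \<Rightarrow> dyn_edge set" where
  "repr_E Ed I = (\<Union>e\<in>Ed. \<Union>(a, b)\<in>I e. interval_edges (time_instants Ed I) e a b)"

end

theory Submission
  imports Defs
begin

definition nxt :: "real set \<Rightarrow> real \<Rightarrow> real" where
  "nxt T t = (THE t'. t' \<in> T \<and> t < t' \<and> \<not> (\<exists>s\<in>T. t < s \<and> s < t'))"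

lemma nxt_eq:
  assumes "t' \<in> T" "t < t'" "\<not> (\<exists>s\<in>T. t < s \<and> s < t')"
  shows "nxt T t = t'"
  unfolding nxt_def
proof (rule the_equality)
  show "t' \<in> T \<and> t < t' \<and> \<not> (\<exists>s\<in>T. t < s \<and> s < t')" using assms by blast
next
  fix u assume u: "u \<in> T \<and> t < u \<and> \<not> (\<exists>s\<in>T. t < s \<and> s < u)"
  show "u = t'"
  proof (rule ccontr)
    assume "u \<noteq> t'"
    then have "u < t' \<or> t' < u" by linarith
    then show False using u assms by blast
  qed
qed

lemma main:
  assumes c: "ctvg V Ed I"
  shows "finite (time_instants Ed I) \<and>
           repr_E Ed I \<subseteq> V \<times> time_instants Ed I \<times> V \<times> time_instants Ed I \<and>
           (\<forall>d\<in>repr_E Ed I. spatial d \<or> temporal d) \<and>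
           finite (repr_E Ed I) \<and>
           real (card (repr_E Ed I)) \<le> 8 * (real (eta Ed I))^2"
proof -
  define T where "T = time_instants Ed I"
  define pr where "pr = (\<lambda>e::nat set. {(x,y). x \<in> e \<and> y \<in> e \<and> x \<noteq> y})"
  define P where "P = (\<Union>e\<in>Ed. \<Union>p\<in>I e. pr e)"
  have finEd: "finite Ed" using c unfolding ctvg_def by blast
  have finI: "\<And>e. e \<in> Ed \<Longrightarrow> finite (I e)" using c unfolding ctvg_def by blast
  have edge: "\<And>e. e \<in> Ed \<Longrightarrow> \<exists>u v. e = {u, v} \<and> u \<noteq> v \<and> u \<in> V \<and> v \<in> V"
    using c unfolding ctvg_def by blast
  have prc: "finite (pr e) \<and> card (pr e) \<le> 2" if ee: "e \<in> Ed" for e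
  proof -
    obtain u v where "e = {u,v}" "u \<noteq> v" using edge[OF ee] by blast
    then have "pr e = {(u,v),(v,u)}" unfolding pr_def by auto
    then show ?thesis by (simp add: card_insert_le_m1)
  qed
  have finT: "finite T" unfolding T_def time_instants_def using finEd finI by auto
  have cardT: "card T \<le> 2 * eta Ed I"
  proof -
    have "card T \<le> (\<Sum>e\<in>Ed. card (\<Union>(a, b)\<in>I e. {a, b}))"
      unfolding T_def time_instants_def using finEd by (rule card_UN_le)
    also have "\<dots> \<le> (\<Sum>e\<in>Ed. 2 * card (I e))"
    proof (rule sum_mono)
      fix e assume e: "e \<in> Ed"
      have "card (\<Union>(a, b)\<in>I e. {a, b}) \<le> (\<Sum>p\<in>I e. card ((\<lambda>(a,b). {a,b}) p))"
        using finI[OF e] by (rule card_UN_le)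
      also have "\<dots> \<le> (\<Sum>p\<in>I e. 2)"
        by (rule sum_mono) (auto simp: card_insert_le_m1)
      finally show "card (\<Union>(a, b)\<in>I e. {a, b}) \<le> 2 * card (I e)" by simp
    qed
    finally show ?thesis unfolding eta_def by (simp add: sum_distrib_left)
  qed
  have finP: "finite P" unfolding P_def using finEd finI prc by auto
  have cardP: "card P \<le> 2 * eta Ed I"
  proof -
    have "card P \<le> (\<Sum>e\<in>Ed. card (\<Union>p\<in>I e. pr e))"
      unfolding P_def using finEd by (rule card_UN_le)
    also have "\<dots> \<le> (\<Sum>e\<in>Ed. 2 * card (I e))"
    proof (rule sum_mono)
      fix e assume e: "e \<in> Ed"
      have "card (\<Union>p\<in>I e. pr e) \<le> (\<Sum>p\<in>I e. card (pr e))"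
        using finI[OF e] by (rule card_UN_le)
      also have "\<dots> \<le> (\<Sum>p\<in>I e. 2)"
        by (rule sum_mono) (use prc[OF e] in auto)
      finally show "card (\<Union>p\<in>I e. pr e) \<le> 2 * card (I e)" by simp
    qed
    finally show ?thesis unfolding eta_def by (simp add: sum_distrib_left)
  qed
  define A where "A = (\<lambda>((x,y),t). (x,t,y,t)) ` (P \<times> T)"
  define B where "B = (\<lambda>(x,t). (x,t,x,nxt T t)) ` (fst ` P \<times> T)"
  have sub: "repr_E Ed I \<subseteq> A \<union> B"
  proof
    fix d assume "d \<in> repr_E Ed I"
    then obtain e a b where e: "e \<in> Ed" and ab: "(a,b) \<in> I e"
      and d: "d \<in> interval_edges T e a b"
      unfolding repr_E_def T_def by blast
    obtain u v where uv: "e = {u, v}" "u \<noteq> v" using edge[OF e] by blast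
    have inP: "\<And>x y. x \<in> e \<Longrightarrow> y \<in> e \<Longrightarrow> x \<noteq> y \<Longrightarrow> (x,y) \<in> P"
      unfolding P_def pr_def using e ab by blast
    have inW: "\<And>x. x \<in> e \<Longrightarrow> x \<in> fst ` P"
    proof -
      fix x assume x: "x \<in> e"
      then obtain y where "y \<in> e" "x \<noteq> y" using uv by blast
      then have "(x,y) \<in> P" using inP x by blast
      then show "x \<in> fst ` P" by force
    qed
    from d show "d \<in> A \<union> B"
      unfolding interval_edges_def
    proof
      assume "d \<in> {(x, t, y, t) | x y t. x \<in> e \<and> y \<in> e \<and> x \<noteq> y \<and> t \<in> T \<and> a \<le> t \<and> t \<le> b}"
      then obtain x y t where "d = (x,t,y,t)" "x \<in> e" "y \<in> e" "x \<noteq> y" "t \<in> T" by blast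
      then have "d \<in> A" unfolding A_def using inP by force
      then show ?thesis by blast
    next
      assume "d \<in> {(x, t, x, t') | x t t'. x \<in> e \<and> t \<in> T \<and> t' \<in> T \<and> a \<le> t \<and> t < t' \<and> t' \<le> b \<and>
        \<not> (\<exists>s\<in>T. t < s \<and> s < t')}"
      then obtain x t t' where h: "d = (x,t,x,t')" "x \<in> e" "t \<in> T" "t' \<in> T" "t < t'"
        "\<not> (\<exists>s\<in>T. t < s \<and> s < t')" by blast
      then have "nxt T t = t'" using nxt_eq by blast
      then have "d = (\<lambda>(x,t). (x,t,x,nxt T t)) (x,t)" using h by simp
      moreover have "(x,t) \<in> fst ` P \<times> T" using h inW by blast
      ultimately have "d \<in> B" unfolding B_def by blast
      then show ?thesis by blast
    qed
  qed
  have finAB: "finite (A \<union> B)" unfolding A_def B_def using finP finT by auto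
  have c1: "card (repr_E Ed I) \<le> card (A \<union> B)" using finAB sub by (rule card_mono)
  have c2: "card (A \<union> B) \<le> card A + card B" by (rule card_Un_le)
  have c3: "card A \<le> card P * card T"
  proof -
    have "card A \<le> card (P \<times> T)" unfolding A_def by (rule card_image_le) (use finP finT in simp)
    also have "\<dots> = card P * card T" by (rule card_cartesian_product)
    finally show ?thesis .
  qed
  have c4: "card B \<le> card P * card T"
  proof -
    have "card B \<le> card (fst ` P \<times> T)" unfolding B_def
      by (rule card_image_le) (use finP finT in simp)
    also have "\<dots> = card (fst ` P) * card T" by (rule card_cartesian_product)
    also have "\<dots> \<le> card P * card T" using finP by (simp add: card_image_le)
    finally show ?thesis .
  qed
  have k: "card (repr_E Ed I) \<le> 2 * (card P * card T)" using c1 c2 c3 c4 by linarith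
  have "card P * card T \<le> (2 * eta Ed I) * (2 * eta Ed I)"
    using cardP cardT by (rule mult_le_mono)
  with k have c8: "card (repr_E Ed I) \<le> 8 * (eta Ed I)^2" by (simp add: power2_eq_square)
  have cardR: "real (card (repr_E Ed I)) \<le> 8 * (real (eta Ed I))^2"
  proof -
    have "real (card (repr_E Ed I)) \<le> real (8 * (eta Ed I)^2)" using c8 by (rule of_nat_mono)
    then show ?thesis by simp
  qed
  have inc: "repr_E Ed I \<subseteq> V \<times> T \<times> V \<times> T"
  proof
    fix d assume "d \<in> repr_E Ed I"
    then obtain e a b where e: "e \<in> Ed" and d: "d \<in> interval_edges T e a b"
      unfolding repr_E_def T_def by blast
    have "e \<subseteq> V" using edge[OF e] by blast
    then show "d \<in> V \<times> T \<times> V \<times> T" using d unfolding interval_edges_def by auto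
  qed
  have st: "\<forall>d\<in>repr_E Ed I. spatial d \<or> temporal d"
  proof
    fix d assume "d \<in> repr_E Ed I"
    then obtain e a b where d: "d \<in> interval_edges T e a b"
      unfolding repr_E_def T_def by blast
    then show "spatial d \<or> temporal d" unfolding interval_edges_def spatial_def temporal_def
      by auto
  qed
  have "finite (repr_E Ed I)" using sub finAB by (rule finite_subset)
  then show ?thesis using finT inc st cardR unfolding T_def by simp
qed

theorem proposition1:
  shows "\<exists>c::real. \<forall>V Ed I. ctvg V Ed I \<longrightarrow>
           finite (time_instants Ed I) \<and>
           repr_E Ed I \<subseteq> V \<times> time_instants Ed I \<times> V \<times> time_instants Ed I \<and>
           (\<forall>d\<in>repr_E Ed I. spatial d \<or> temporal d) \<and>
           finite (repr_E Ed I) \<and>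
           real (card (repr_E Ed I)) \<le> c * (real (eta Ed I))^2"
  using main by blast

end
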